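(* Let $q>0$ and let $\{|n_q\rangle\}_{n\ge0}$ be the orthonormal basis of $ML^2(\mathbb{C}\setminus\mathbb{R}_-;q)$ given by \[ |n_q\rangle(z)=\frac{z^{qn}}{\sqrt{\Gamma(qn+1)}}. \] Then: <ol> <li>Each $|n_q\rangle$ lies in the domain of $a^\dagger a$.</li> <li>We have \[ a^\dagger a|n_q\rangle=\begin{cases}\dfrac{\Gamma(qn+1)}{\Gamma(q(n-1)+1)}\,|n_q\rangle, & n\ge1,\\[2mm] 0, & n=0.\end{cases} \]</li> <li>The operator $a^\dagger a$, defined on the linear span of $\{|n_q\rangle\}$ by these relations, extends to a positive self-adjoint operator, again denoted $a^\dagger a$, on its maximal domain.</li> <li>If $f(z)=\sum_{n=0}^\infty a_n z^{qn}$ belongs to $ML^2(\mathbb{C}\setminus\mathbb{R}_-;q)$ and to the domain of $a^\dagger a$, then \[ (a^\dagger a f)(z)=\sum_{n=1}^\infty a_n\frac{\Gamma(qn+1)}{\Gamma(q(n-1)+1)}\,z^{qn}. \]</li> </ol>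
   Context: Fix $q>0$. The Mittag-Leffler space of the slitted plane is \[ ML^2(\mathbb{C}\setminus\mathbb{R}_-;q)=\Big\{f:\mathbb{C}\setminus\mathbb{R}_-\to\mathbb{C},\ f(z)=\sum_{n\ge0}a_nz^{qn}\ :\ \sum_{n\ge0}|a_n|^2\Gamma(qn+1)<\infty\Big\}, \] with the principal branch of $z^{qn}$ on $\mathbb{C}\setminus(-\infty,0]$. Its scalar product is \[ \langle f,g\rangle=\sum_{n\ge0}\overline{a_n}\,b_n\,\Gamma(qn+1) \] for $f=\sum a_nz^{qn}$ and $g=\sum b_nz^{qn}$. For $f=\sum a_n z^{qn}$, the Caputo fractional derivative of order $q$ is \[ D^q_*f(z)=\sum_{n\ge1}a_n\frac{\Gamma(qn+1)}{\Gamma(q(n-1)+1)}z^{q(n-1)}, \] defined whenever $\sum_{n\ge1}|a_n|^2\,\big|\Gamma(qn+1)/\Gamma(q(n-1)+1)\big|^2<\infty$. The creation and annihilation operators are defined as follows: <ul> <li>$a^\dagger f=z^q f$ on $\operatorname{Dom}(a^\dagger)=\{f\in ML^2(\mathbb{C}\setminus\mathbb{R}_-;q): z^qf\in ML^2(\mathbb{C}\setminus\mathbb{R}_-;q)\}$;</li> <li>$af=D^q_*f$ on $\operatorname{Dom}(a)=\{f\in ML^2(\mathbb{C}\setminus\mathbb{R}_-;q): D^q_*f\in ML^2(\mathbb{C}\setminus\mathbb{R}_-;q)\}$.</li> </ul> These are closed, densely defined and mutually adjoint. The operator $a^\dagger a$ is defined on $\{f\in\operatorname{Dom}(a): af\in\operatorname{Dom}(a^\dagger)\}$.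 *)

theory Defs
  imports "HOL-Analysis.Analysis"
begin

definition slit :: "complex set" where
  "slit = {z. \<not> (Im z = 0 \<and> Re z \<le> 0)}"

definition wt :: "real \<Rightarrow> nat \<Rightarrow> real" where
  "wt q n = Gamma (q * real n + 1)"

text \<open>Principal branch power z^(qn) (complex powr uses the principal logarithm).\<close>
definition zq :: "real \<Rightarrow> nat \<Rightarrow> complex \<Rightarrow> complex" where
  "zq q n z = z powr (complex_of_real (q * real n))"

definition mlser :: "real \<Rightarrow> (nat \<Rightarrow> complex) \<Rightarrow> complex \<Rightarrow> complex" where
  "mlser q a = (\<lambda>z. if z \<in> slit then (\<Sum>n. a n * zq q n z) else 0)"

definition ML2coef :: "real \<Rightarrow> (nat \<Rightarrow> complex) \<Rightarrow> bool" where
  "ML2coef q a \<longleftrightarrow> summable (\<lambda>n. (cmod (a n))\<^sup>2 * wt q n)"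

definition ML2 :: "real \<Rightarrow> (complex \<Rightarrow> complex) set" where
  "ML2 q = {f. \<exists>a. ML2coef q a \<and> f = mlser q a}"

definition coef :: "real \<Rightarrow> (complex \<Rightarrow> complex) \<Rightarrow> nat \<Rightarrow> complex" where
  "coef q f = (THE a. ML2coef q a \<and> f = mlser q a)"

definition ml_inner :: "real \<Rightarrow> (complex \<Rightarrow> complex) \<Rightarrow> (complex \<Rightarrow> complex) \<Rightarrow> complex" where
  "ml_inner q f g = (\<Sum>n. cnj (coef q f n) * coef q g n * complex_of_real (wt q n))"

definition ml_norm :: "real \<Rightarrow> (complex \<Rightarrow> complex) \<Rightarrow> real" where
  "ml_norm q f = sqrt (Re (ml_inner q f f))"

text \<open>Gamma(qn+1)/Gamma(q(n-1)+1), used for n >= 1 only.\<close>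
definition lam :: "real \<Rightarrow> nat \<Rightarrow> real" where
  "lam q n = Gamma (q * real n + 1) / Gamma (q * (real n - 1) + 1)"

text \<open>Caputo fractional derivative of order q (on coefficients).\<close>
definition caputo :: "real \<Rightarrow> (complex \<Rightarrow> complex) \<Rightarrow> complex \<Rightarrow> complex" where
  "caputo q f = mlser q (\<lambda>n. coef q f (Suc n) * complex_of_real (lam q (Suc n)))"

definition dom_a :: "real \<Rightarrow> (complex \<Rightarrow> complex) set" where
  "dom_a q = {f \<in> ML2 q.
     summable (\<lambda>n. (cmod (coef q f (Suc n)))\<^sup>2 * (lam q (Suc n))\<^sup>2) \<and>
     ML2coef q (\<lambda>n. coef q f (Suc n) * complex_of_real (lam q (Suc n)))}"

definition op_a :: "real \<Rightarrow> (complex \<Rightarrow> complex) \<Rightarrow> complex \<Rightarrow> complex" where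
  "op_a q f = caputo q f"

definition op_adag :: "real \<Rightarrow> (complex \<Rightarrow> complex) \<Rightarrow> complex \<Rightarrow> complex" where
  "op_adag q f = (\<lambda>z. z powr (complex_of_real q) * f z)"

definition dom_adag :: "real \<Rightarrow> (complex \<Rightarrow> complex) set" where
  "dom_adag q = {f \<in> ML2 q. op_adag q f \<in> ML2 q}"

definition dom_NN :: "real \<Rightarrow> (complex \<Rightarrow> complex) set" where
  "dom_NN q = {f \<in> dom_a q. op_a q f \<in> dom_adag q}"

definition op_NN :: "real \<Rightarrow> (complex \<Rightarrow> complex) \<Rightarrow> complex \<Rightarrow> complex" where
  "op_NN q f = op_adag q (op_a q f)"

definition ket :: "real \<Rightarrow> nat \<Rightarrow> complex \<Rightarrow> complex" where
  "ket q n = (\<lambda>z. if z \<in> slit then zq q n z / complex_of_real (sqrt (Gamma (q * real n + 1))) else 0)"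

definition ket_span :: "real \<Rightarrow> (complex \<Rightarrow> complex) set" where
  "ket_span q = {(\<lambda>z. \<Sum>k<N. c k * ket q k z) | N c. True}"

definition lin_op :: "real \<Rightarrow> (complex \<Rightarrow> complex) set \<Rightarrow> ((complex \<Rightarrow> complex) \<Rightarrow> complex \<Rightarrow> complex) \<Rightarrow> bool" where
  "lin_op q D T \<longleftrightarrow> D \<subseteq> ML2 q \<and> (\<lambda>z. 0) \<in> D \<and>
     (\<forall>f\<in>D. \<forall>g\<in>D. (\<lambda>z. f z + g z) \<in> D \<and> T (\<lambda>z. f z + g z) = (\<lambda>z. T f z + T g z)) \<and>
     (\<forall>f\<in>D. \<forall>c. (\<lambda>z. c * f z) \<in> D \<and> T (\<lambda>z. c * f z) = (\<lambda>z. c * T f z)) \<and>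
     (\<forall>f\<in>D. T f \<in> ML2 q)"

definition self_adjoint :: "real \<Rightarrow> (complex \<Rightarrow> complex) set \<Rightarrow> ((complex \<Rightarrow> complex) \<Rightarrow> complex \<Rightarrow> complex) \<Rightarrow> bool" where
  "self_adjoint q D T \<longleftrightarrow> lin_op q D T \<and>
     (\<forall>f\<in>ML2 q. \<forall>e>0. \<exists>g\<in>D. ml_norm q (\<lambda>z. f z - g z) < e) \<and>
     (\<forall>f\<in>D. \<forall>g\<in>D. ml_inner q (T f) g = ml_inner q f (T g)) \<and>
     (\<forall>g\<in>ML2 q. \<forall>h\<in>ML2 q. (\<forall>f\<in>D. ml_inner q (T f) g = ml_inner q f h) \<longrightarrow> g \<in> D \<and> T g = h)"

definition positive_op :: "real \<Rightarrow> (complex \<Rightarrow> complex) set \<Rightarrow> ((complex \<Rightarrow> complex) \<Rightarrow> complex \<Rightarrow> complex) \<Rightarrow> bool" where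
  "positive_op q D T \<longleftrightarrow> (\<forall>f\<in>D. Im (ml_inner q f (T f)) = 0 \<and> Re (ml_inner q f (T f)) \<ge> 0)"

definition max_dom :: "real \<Rightarrow> (complex \<Rightarrow> complex) set" where
  "max_dom q = {f \<in> ML2 q. ML2coef q (\<lambda>n. coef q f n * complex_of_real (if n = 0 then 0 else lam q n))}"

end

theory Submission
  imports Defs
begin

lemma ratio_lb_small:
  fixes q x :: real
  assumes q: "0 < q" "q < 1" and x: "1 \<le> x"
  shows "exp (- ln 2 + q * ln x) \<le> Gamma (x + q) / Gamma x"
proof -
  have cv: "convex_on {0<..} (ln \<circ> Gamma :: real \<Rightarrow> real)" by (rule log_convex_Gamma_real)
  have "(ln \<circ> Gamma) ((1 - (1-q)) *\<^sub>R (x+q) + (1-q) *\<^sub>R (x+q+1)) \<le> (1 - (1-q)) * (ln \<circ> Gamma) (x+q) + (1-q) * (ln \<circ> Gamma) (x+q+1)"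
    using q x by (intro convex_onD[OF cv]) auto
  moreover have "(1 - (1-q)) *\<^sub>R (x+q) + (1-q) *\<^sub>R (x+q+1) = x + 1" by (simp add: algebra_simps)
  ultimately have c: "ln (Gamma (x+1)) \<le> q * ln (Gamma (x+q)) + (1-q) * ln (Gamma (x+q+1))" by simp
  have nz: "y > 0 \<Longrightarrow> y \<notin> \<int>\<^sub>\<le>\<^sub>0" for y :: real by (auto elim!: nonpos_Ints_cases)
  have g1: "Gamma (x+1) = x * Gamma x" using x nz[of x] by (intro Gamma_plus1) auto
  have g2: "Gamma (x+q+1) = (x+q) * Gamma (x+q)" using x q nz[of "x+q"] by (intro Gamma_plus1) auto
  have p1: "Gamma x > 0" "Gamma (x+q) > 0" using x q by auto
  have e1: "ln (Gamma (x+1)) = ln x + ln (Gamma x)" unfolding g1 by (rule ln_mult_pos) (use p1 x in auto)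
  have e2: "ln (Gamma (x+q+1)) = ln (x+q) + ln (Gamma (x+q))" unfolding g2 by (rule ln_mult_pos) (use p1 x q in auto)
  have l2: "ln (x+q) \<le> ln 2 + ln x"
  proof -
    have "ln (x+q) \<le> ln (2*x)" using x q by (subst ln_le_cancel_iff) auto
    also have "\<dots> = ln 2 + ln x" using x by (simp add: ln_mult)
    finally show ?thesis .
  qed
  have c': "ln x + ln (Gamma x) \<le> ln (Gamma (x+q)) + (1-q) * ln (x+q)"
    using c unfolding e1 e2 by (simp add: algebra_simps)
  have m: "(1-q) * ln (x+q) \<le> (1-q) * (ln 2 + ln x)" using l2 q by (intro mult_left_mono) auto
  have m2: "(1-q) * ln 2 \<le> 1 * ln (2::real)" using q by (intro mult_right_mono) auto
  have ex: "(1-q) * (ln 2 + ln x) = (1-q) * ln 2 + ln x - q * ln x" by (simp add: algebra_simps)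
  have L: "ln (Gamma (x+q)) - ln (Gamma x) \<ge> q * ln x - ln 2"
    using c' m m2 ex by linarith
  have "exp (- ln 2 + q * ln x) \<le> exp (ln (Gamma (x+q)) - ln (Gamma x))" using L by simp
  also have "\<dots> = Gamma (x+q) / Gamma x" using p1 by (simp add: exp_diff)
  finally show ?thesis .
qed

lemma ratio_lb_big:
  fixes q x :: real
  assumes q: "1 \<le> q" and x: "3/2 \<le> x"
  shows "x \<le> Gamma (x + q) / Gamma x"
proof -
  have nz: "x \<notin> \<int>\<^sub>\<le>\<^sub>0" using x by (auto elim!: nonpos_Ints_cases)
  have "Gamma (x+1) \<le> Gamma (x+q)"
  proof (cases "q = 1")
    case False then show ?thesis using x q by (intro less_imp_le Gamma_real_strict_mono) auto
  qed simp
  moreover have "Gamma (x+1) = x * Gamma x" using nz by (rule Gamma_plus1)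
  moreover have "Gamma x > 0" using x by auto
  ultimately show ?thesis by (simp add: field_simps)
qed

lemma lin_tendsto: "0 < (q::real) \<Longrightarrow> filterlim (\<lambda>n::nat. q * real n + 1) at_top sequentially"
proof -
  assume q: "0 < q"
  have "LIM n sequentially. q * real n :> at_top"
    by (rule filterlim_tendsto_pos_mult_at_top[OF tendsto_const q filterlim_real_sequentially])
  then have "LIM n sequentially. 1 + q * real n :> at_top"
    by (rule filterlim_tendsto_add_at_top[OF tendsto_const])
  then show ?thesis by (simp add: add.commute)
qed

lemma ratio_tendsto:
  fixes q :: real assumes q: "q > 0"
  shows "filterlim (\<lambda>n::nat. Gamma (q * real n + 1 + q) / Gamma (q * real n + 1)) at_top sequentially"
proof (cases "q < 1")
  case True
  have "LIM n sequentially. ln (q * real n + 1) :> at_top"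
    by (rule filterlim_compose[OF ln_at_top lin_tendsto[OF q]])
  then have "LIM n sequentially. q * ln (q * real n + 1) :> at_top"
    by (rule filterlim_tendsto_pos_mult_at_top[OF tendsto_const q])
  then have "LIM n sequentially. - ln 2 + q * ln (q * real n + 1) :> at_top"
    by (rule filterlim_tendsto_add_at_top[OF tendsto_const])
  then have "filterlim (\<lambda>n::nat. exp (- ln 2 + q * ln (q * real n + 1))) at_top sequentially"
    by (rule filterlim_compose[OF exp_at_top])
  then show ?thesis
  proof (rule filterlim_at_top_mono)
    show "\<forall>\<^sub>F n in sequentially. exp (- ln 2 + q * ln (q * real n + 1)) \<le> Gamma (q * real n + 1 + q) / Gamma (q * real n + 1)"
      by (rule always_eventually, intro allI ratio_lb_small) (use q True in auto)
  qed
next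
  case False
  have "eventually (\<lambda>n. 3/2 \<le> q * real n + 1) sequentially"
    using lin_tendsto[OF q] unfolding filterlim_at_top by (rule allE)
  then have ev: "\<forall>\<^sub>F n in sequentially. q * real n + 1 \<le> Gamma (q * real n + 1 + q) / Gamma (q * real n + 1)"
    by (rule eventually_mono) (rule ratio_lb_big, use False in auto)
  show ?thesis by (rule filterlim_at_top_mono[OF lin_tendsto[OF q] ev])
qed

lemma arg_pos: "0 < (q::real) \<Longrightarrow> 0 < q * real n + 1" "0 < (q::real) \<Longrightarrow> 0 < q * real n + 1 + q"
  using mult_nonneg_nonneg[of q "real n"] by linarith+

lemma ratio_ev:
  fixes q :: real assumes q: "q > 0"
  shows "eventually (\<lambda>n::nat. C * Gamma (q * real n + 1) \<le> Gamma (q * real n + 1 + q)) sequentially"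
proof -
  have "eventually (\<lambda>n::nat. C \<le> Gamma (q * real n + 1 + q) / Gamma (q * real n + 1)) sequentially"
    using ratio_tendsto[OF q] unfolding filterlim_at_top by blast
  then show ?thesis
  proof (rule eventually_mono)
    fix n :: nat assume "C \<le> Gamma (q * real n + 1 + q) / Gamma (q * real n + 1)"
    moreover have "Gamma (q * real n + 1) > 0" using q by (intro Gamma_real_pos arg_pos)
    ultimately show "C * Gamma (q * real n + 1) \<le> Gamma (q * real n + 1 + q)"
      by (simp add: field_simps)
  qed
qed

lemma Gamma_ge1_ev:
  fixes q :: real assumes q: "q > 0"
  shows "eventually (\<lambda>n::nat. 1 \<le> Gamma (q * real n + 1)) sequentially"
proof -
  have "filterlim (\<lambda>n::nat. (q * real n + 1)) at_top sequentially" using q by (rule lin_tendsto)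
  then have "eventually (\<lambda>n::nat. 2 \<le> q * real n + 1) sequentially"
    unfolding filterlim_at_top by (rule allE)
  then show ?thesis
  proof (rule eventually_mono)
    fix n :: nat assume n: "2 \<le> q * real n + 1"
    have "Gamma ((1::real)+1) = 1 * Gamma 1" by (rule Gamma_plus1) (auto elim!: nonpos_Ints_cases)
    then have G2: "Gamma (2::real) = 1" by simp
    show "1 \<le> Gamma (q * real n + 1)"
    proof (cases "q * real n + 1 = 2")
      case True then show ?thesis using G2 by simp
    next
      case False
      then have "Gamma 2 < Gamma (q * real n + 1)" using n by (intro Gamma_real_strict_mono) auto
      then show ?thesis using G2 by simp
    qed
  qed
qed

lemma summable_R_Gamma:
  fixes q R :: real assumes q: "q > 0" and R: "R \<ge> 0"
  shows "summable (\<lambda>n. R ^ n / Gamma (q * real n + 1))"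
proof -
  obtain N where N: "\<And>n. n \<ge> N \<Longrightarrow> (2*R) * Gamma (q * real n + 1) \<le> Gamma (q * real n + 1 + q)"
    using ratio_ev[OF q, of "2*R"] unfolding eventually_sequentially by blast
  show ?thesis
  proof (rule summable_ratio_test[of "1/2" N])
    fix n assume n: "n \<ge> N"
    have g0: "Gamma (q * real n + 1) > 0" "Gamma (q * real n + 1 + q) > 0" using q by (auto intro!: Gamma_real_pos arg_pos)
    have e: "q * real (Suc n) + 1 = q * real n + 1 + q" by (simp add: algebra_simps)
    have "R * (R ^ n / Gamma (q * real n + 1 + q)) \<le> 1/2 * (R ^ n / Gamma (q * real n + 1))"
    proof -
      have "R * Gamma (q * real n + 1) \<le> 1/2 * Gamma (q * real n + 1 + q)" using N[OF n] by simp
      then have "R * Gamma (q * real n + 1) * R^n \<le> 1/2 * Gamma (q * real n + 1 + q) * R^n"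
        using R by (intro mult_right_mono) auto
      then show ?thesis using g0 by (simp add: field_simps)
    qed
    then show "norm (R ^ Suc n / Gamma (q * real (Suc n) + 1)) \<le> 1 / 2 * norm (R ^ n / Gamma (q * real n + 1))"
      using g0 R unfolding e by (simp add: abs_of_nonneg)
  qed simp
qed

definition conv :: "(nat \<Rightarrow> complex) \<Rightarrow> bool" where
  "conv a \<longleftrightarrow> (\<forall>R\<ge>0. summable (\<lambda>n. norm (a n) * R ^ n))"

lemma amgm: fixes x y g :: real assumes "g > 0" shows "x * y \<le> (x^2 * g + y^2 / g) / 2"
proof -
  have "0 \<le> (x*g - y)^2 / g" using assms by simp
  also have "(x*g - y)^2 / g = x^2 * g - 2*x*y + y^2/g" using assms
    by (simp add: power2_eq_square field_simps)
  finally show ?thesis by simp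
qed

lemma wt_pos: "0 < q \<Longrightarrow> 0 < wt q n" unfolding wt_def by (intro Gamma_real_pos arg_pos)

lemma ML2coef_conv:
  assumes q: "q > 0" and a: "ML2coef q a" shows "conv a"
  unfolding conv_def
proof (intro allI impI)
  fix R :: real assume R: "R \<ge> 0"
  have s1: "summable (\<lambda>n. (cmod (a n))\<^sup>2 * wt q n)" using a unfolding ML2coef_def .
  have s2: "summable (\<lambda>n. (R^2) ^ n / wt q n)" unfolding wt_def using summable_R_Gamma[OF q, of "R^2"] by simp
  have "summable (\<lambda>n. ((cmod (a n))\<^sup>2 * wt q n + (R^n)^2 / wt q n) / 2)"
    using summable_add[OF s1 s2] by (intro summable_divide) (simp add: power_mult[symmetric] mult.commute)
  then show "summable (\<lambda>n. norm (a n) * R ^ n)"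
  proof (rule summable_comparison_test'[where N=0])
    fix n :: nat
    show "norm (norm (a n) * R ^ n) \<le> ((cmod (a n))\<^sup>2 * wt q n + (R^n)^2 / wt q n) / 2"
      using amgm[of "wt q n" "cmod (a n)" "R^n"] wt_pos[OF q, of n] R by (simp add: abs_mult)
  qed
qed

lemma zq_pow: "z \<noteq> 0 \<Longrightarrow> zq q n z = (z powr complex_of_real q) ^ n"
proof -
  assume z: "z \<noteq> 0"
  have "exp (complex_of_real q * (complex_of_nat n * Ln z)) = exp (complex_of_nat n * (complex_of_real q * Ln z))"
    by (simp only: mult.left_commute)
  then show ?thesis using z unfolding zq_def powr_def by (simp add: exp_of_nat_mult[symmetric] mult.assoc)
qed

lemma zq_0: "zq q n 0 = 0" unfolding zq_def by (simp add: powr_def)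

lemma summable_zq:
  assumes "conv a" shows "summable (\<lambda>n. a n * zq q n z)"
proof (cases "z = 0")
  case True then show ?thesis by (simp add: zq_0)
next
  case False
  have "summable (\<lambda>n. norm (a n) * norm (z powr complex_of_real q) ^ n)"
    using assms unfolding conv_def by auto
  then have "summable (\<lambda>n. norm (a n * zq q n z))" using False by (simp add: zq_pow norm_mult norm_power)
  then show ?thesis by (rule summable_norm_cancel)
qed

lemma powser_zero_pos:
  fixes c :: "nat \<Rightarrow> complex"
  assumes sm: "\<And>w. summable (\<lambda>n. c n * w ^ n)"
    and z: "\<And>t::real. t > 0 \<Longrightarrow> (\<Sum>n. c n * of_real t ^ n) = 0"
  shows "c m = 0"
proof -
  have "\<forall>k<m'. c k = 0" for m'
  proof (induction m')
    case 0 then show ?case by simp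
  next
    case (Suc m)
    define d where "d n = c (n + m)" for n
    have smd: "summable (\<lambda>n. d n * w ^ n)" for w
      unfolding d_def by (simp add: summable_powser_ignore_initial_segment sm)
    have dz: "(\<Sum>n. d n * of_real t ^ n) = 0" if t: "t > 0" for t :: real
    proof -
      have "(\<lambda>n. c n * of_real t ^ n) sums 0" using summable_sums[OF sm[of "of_real t"]] z[OF t] by simp
      then have "(\<lambda>i. c (i + m) * of_real t ^ (i + m)) sums 0"
        using sums_zero_iff_shift[of m "\<lambda>n. c n * of_real t ^ n" 0] Suc.IH by simp
      then have "(\<lambda>i. inverse (of_real t ^ m) * (c (i + m) * of_real t ^ (i + m))) sums (inverse (of_real t ^ m) * 0)"
        by (rule sums_mult)
      moreover have "inverse (of_real t ^ m) * (c (i + m) * of_real t ^ (i + m)) = d i * of_real t ^ i" for i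
        using t by (simp add: d_def power_add field_simps)
      ultimately have "(\<lambda>i. d i * of_real t ^ i) sums 0" by simp
      then show ?thesis by (rule sums_unique[symmetric])
    qed
    have ic: "isCont (\<lambda>w. \<Sum>n. d n * w ^ n) 0" by (rule isCont_powser_converges_everywhere[OF smd])
    have "((\<lambda>t::real. \<Sum>n. d n * (of_real t) ^ n) \<longlongrightarrow> (\<Sum>n. d n * 0 ^ n)) (at_right 0)"
    (is "(?F \<longlongrightarrow> _) _")
    proof -
      have "((\<lambda>t::real. complex_of_real t) \<longlongrightarrow> 0) (at_right 0)"
        using tendsto_of_real[OF tendsto_ident_at[of "0::real" "{0<..}"]] by simp
      from isCont_tendsto_compose[OF ic this] show ?thesis by simp
    qed
    note lim = this
    have "eventually (\<lambda>t::real. t > 0) (at_right 0)" by (simp add: eventually_at_filter)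
    then have ev: "eventually (\<lambda>t::real. ?F t = 0) (at_right 0)"
      by (rule eventually_mono) (rule dz)
    have "((\<lambda>t::real. 0) \<longlongrightarrow> d 0) (at_right 0)"
      using iffD1[OF tendsto_cong[OF ev] lim[simplified]] .
    then have "d 0 = 0" using tendsto_unique[OF trivial_limit_at_right_real tendsto_const] by metis
    then show ?case using Suc.IH by (auto simp: d_def less_Suc_eq)
  qed
  then show ?thesis by blast
qed

lemma conv_add: "conv a \<Longrightarrow> conv b \<Longrightarrow> conv (\<lambda>n. a n + b n)"
  unfolding conv_def
proof (intro allI impI)
  fix R :: real assume R: "R \<ge> 0" and a: "\<forall>R\<ge>0. summable (\<lambda>n. norm (a n) * R ^ n)" and b: "\<forall>R\<ge>0. summable (\<lambda>n. norm (b n) * R ^ n)"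
  have "summable (\<lambda>n. norm (a n) * R ^ n + norm (b n) * R ^ n)" using a b R by (intro summable_add) auto
  then show "summable (\<lambda>n. norm (a n + b n) * R ^ n)"
  proof (rule summable_comparison_test'[where N=0])
    fix n :: nat
    have "norm (a n + b n) * R ^ n \<le> (norm (a n) + norm (b n)) * R ^ n"
      using R by (intro mult_right_mono norm_triangle_ineq) auto
    then show "norm (norm (a n + b n) * R ^ n) \<le> norm (a n) * R ^ n + norm (b n) * R ^ n"
      using R by (simp add: algebra_simps)
  qed
qed

lemma conv_scale: "conv a \<Longrightarrow> conv (\<lambda>n. c * a n)"
  unfolding conv_def
proof (intro allI impI)
  fix R :: real assume R: "R \<ge> 0" and a: "\<forall>R\<ge>0. summable (\<lambda>n. norm (a n) * R ^ n)"
  have "summable (\<lambda>n. norm c * (norm (a n) * R ^ n))" using a R by (intro summable_mult) auto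
  then show "summable (\<lambda>n. norm (c * a n) * R ^ n)" by (simp add: norm_mult mult.assoc)
qed

lemma conv_diff: "conv a \<Longrightarrow> conv b \<Longrightarrow> conv (\<lambda>n. a n - b n)"
  using conv_add[of a "\<lambda>n. (-1) * b n"] conv_scale[of b "-1"] by simp

lemma conv_shift: "conv b \<Longrightarrow> conv (\<lambda>n. case n of 0 \<Rightarrow> 0 | Suc m \<Rightarrow> b m)"
  unfolding conv_def
proof (intro allI impI)
  fix R :: real assume R: "R \<ge> 0" and b: "\<forall>R\<ge>0. summable (\<lambda>n. norm (b n) * R ^ n)"
  have "summable (\<lambda>n. R * (norm (b n) * R ^ n))" using b R by (intro summable_mult) auto
  then have "summable (\<lambda>n. (\<lambda>n. norm (case n of 0 \<Rightarrow> 0 | Suc m \<Rightarrow> b m) * R ^ n) (Suc n))"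
    by (simp add: mult_ac)
  then show "summable (\<lambda>n. norm (case n of 0 \<Rightarrow> 0 | Suc m \<Rightarrow> b m) * R ^ n)"
    by (rule summable_Suc_iff[THEN iffD1])
qed

lemma pos_real_slit:
  fixes q t :: real assumes q: "q > 0" and t: "t > 0"
  shows "complex_of_real (t powr (1/q)) \<in> slit"
    and "complex_of_real (t powr (1/q)) powr complex_of_real q = complex_of_real t"
proof -
  show "complex_of_real (t powr (1/q)) \<in> slit" using t by (simp add: slit_def)
  have "complex_of_real (t powr (1/q)) powr complex_of_real q = complex_of_real ((t powr (1/q)) powr q)"
    using t by (intro powr_of_real) simp
  also have "(t powr (1/q)) powr q = t" using q t by (simp add: powr_powr)
  finally show "complex_of_real (t powr (1/q)) powr complex_of_real q = complex_of_real t" .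
qed

lemma slit_nz: "z \<in> slit \<Longrightarrow> z \<noteq> 0" by (auto simp: slit_def)

lemma mlser_zero_unique:
  assumes q: "q > 0" and c: "conv c" and z: "\<And>z. z \<in> slit \<Longrightarrow> (\<Sum>n. c n * zq q n z) = 0"
  shows "c n = 0"
proof (rule powser_zero_pos)
  fix w :: complex
  have "summable (\<lambda>n. norm (c n) * norm w ^ n)" using c unfolding conv_def by auto
  then have "summable (\<lambda>n. norm (c n * w ^ n))" by (simp add: norm_mult norm_power)
  then show "summable (\<lambda>n. c n * w ^ n)" by (rule summable_norm_cancel)
next
  fix t :: real assume t: "t > 0"
  let ?z = "complex_of_real (t powr (1/q))"
  have "zq q n ?z = complex_of_real t ^ n" for n
    using zq_pow[OF slit_nz[OF pos_real_slit(1)[OF q t]]] pos_real_slit(2)[OF q t] by simp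
  then show "(\<Sum>n. c n * complex_of_real t ^ n) = 0" using z[OF pos_real_slit(1)[OF q t]] by simp
qed

lemma mlser_eq_unique:
  assumes q: "q > 0" and a: "conv a" and b: "conv b" and e: "mlser q a = mlser q b"
  shows "a = b"
proof -
  have "a n - b n = 0" for n
  proof (rule mlser_zero_unique[OF q conv_diff[OF a b]])
    fix z assume z: "z \<in> slit"
    have "(\<Sum>n. a n * zq q n z) = (\<Sum>n. b n * zq q n z)" using fun_cong[OF e, of z] z by (simp add: mlser_def)
    then show "(\<Sum>n. (a n - b n) * zq q n z) = 0"
      using suminf_diff[OF summable_zq[OF a, of q z] summable_zq[OF b, of q z]] by (simp add: algebra_simps)
  qed
  then show ?thesis by auto
qed

lemma sq_add_le: fixes x y :: real shows "(x + y)^2 \<le> 2 * x^2 + 2 * y^2"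
proof -
  have "0 \<le> (x - y)^2" by simp
  then show ?thesis by (simp add: power2_eq_square algebra_simps)
qed

lemma ML2coef_add: assumes q: "q > 0" "ML2coef q a" "ML2coef q b" shows "ML2coef q (\<lambda>n. a n + b n)"
  unfolding ML2coef_def
proof -
  have "summable (\<lambda>n. 2 * ((cmod (a n))\<^sup>2 * wt q n) + 2 * ((cmod (b n))\<^sup>2 * wt q n))"
    using q unfolding ML2coef_def by (intro summable_add summable_mult) auto
  then show "summable (\<lambda>n. (cmod (a n + b n))\<^sup>2 * wt q n)"
  proof (rule summable_comparison_test'[where N=0])
    fix n :: nat
    have "(cmod (a n + b n))\<^sup>2 \<le> (cmod (a n) + cmod (b n))\<^sup>2"
      by (intro power_mono norm_triangle_ineq) auto
    also have "\<dots> \<le> 2 * (cmod (a n))\<^sup>2 + 2 * (cmod (b n))\<^sup>2" by (rule sq_add_le)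
    finally have "(cmod (a n + b n))\<^sup>2 * wt q n \<le> (2 * (cmod (a n))\<^sup>2 + 2 * (cmod (b n))\<^sup>2) * wt q n"
      using wt_pos[OF q(1), of n] by (intro mult_right_mono) auto
    then show "norm ((cmod (a n + b n))\<^sup>2 * wt q n) \<le> 2 * ((cmod (a n))\<^sup>2 * wt q n) + 2 * ((cmod (b n))\<^sup>2 * wt q n)"
      using wt_pos[OF q(1), of n] by (simp add: algebra_simps)
  qed
qed

lemma ML2coef_scale: assumes "ML2coef q a" shows "ML2coef q (\<lambda>n. c * a n)"
proof -
  have "summable (\<lambda>n. (cmod c)^2 * ((cmod (a n))\<^sup>2 * wt q n))"
    using assms unfolding ML2coef_def by (intro summable_mult) auto
  then show ?thesis unfolding ML2coef_def by (simp add: norm_mult power_mult_distrib mult.assoc)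
qed

lemma ML2coef_diff: "q > 0 \<Longrightarrow> ML2coef q a \<Longrightarrow> ML2coef q b \<Longrightarrow> ML2coef q (\<lambda>n. a n - b n)"
  using ML2coef_add[of q a "\<lambda>n. (-1) * b n"] ML2coef_scale[of q b "-1"] by simp

lemma ML2coef_fin: assumes "\<And>n. n \<ge> N \<Longrightarrow> a n = 0" shows "ML2coef q a"
  unfolding ML2coef_def
  by (rule summable_comparison_test'[where N=N and g="\<lambda>_. 0"]) (use assms in auto)

lemma coef_mlser: assumes q: "q > 0" and a: "ML2coef q a" shows "coef q (mlser q a) = a"
  unfolding coef_def
proof (rule the_equality)
  show "ML2coef q a \<and> mlser q a = mlser q a" using a by simp
next
  fix b assume "ML2coef q b \<and> mlser q a = mlser q b"
  then show "b = a" using mlser_eq_unique[OF q ML2coef_conv[OF q a] ML2coef_conv[OF q], of b] by auto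
qed

lemma ML2D: assumes q: "q > 0" and f: "f \<in> ML2 q"
  shows "ML2coef q (coef q f)" "f = mlser q (coef q f)"
proof -
  obtain a where a: "ML2coef q a" "f = mlser q a" using f unfolding ML2_def by auto
  then show "ML2coef q (coef q f)" "f = mlser q (coef q f)" using coef_mlser[OF q a(1)] by auto
qed

lemma ML2I: "ML2coef q a \<Longrightarrow> mlser q a \<in> ML2 q" unfolding ML2_def by auto

lemma mlser_add: assumes a: "conv a" and b: "conv b"
  shows "mlser q (\<lambda>n. a n + b n) = (\<lambda>z. mlser q a z + mlser q b z)"
proof
  fix z
  show "mlser q (\<lambda>n. a n + b n) z = mlser q a z + mlser q b z"
    using suminf_add[OF summable_zq[OF a, of q z] summable_zq[OF b, of q z]]
    by (simp add: mlser_def algebra_simps)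
qed

lemma mlser_scale: assumes a: "conv a"
  shows "mlser q (\<lambda>n. c * a n) = (\<lambda>z. c * mlser q a z)"
proof
  fix z
  show "mlser q (\<lambda>n. c * a n) z = c * mlser q a z"
    using suminf_mult[OF summable_zq[OF a, of q z], of c]
    by (simp add: mlser_def mult.assoc)
qed

lemma mlser_diff: assumes a: "conv a" and b: "conv b"
  shows "mlser q (\<lambda>n. a n - b n) = (\<lambda>z. mlser q a z - mlser q b z)"
proof
  fix z
  show "mlser q (\<lambda>n. a n - b n) z = mlser q a z - mlser q b z"
    using suminf_diff[OF summable_zq[OF a, of q z] summable_zq[OF b, of q z]]
    by (simp add: mlser_def algebra_simps)
qed

lemma mlser_zero: "mlser q (\<lambda>_. 0) = (\<lambda>z. 0)"
  by (simp add: mlser_def fun_eq_iff)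

definition nnc :: "real \<Rightarrow> (nat \<Rightarrow> complex) \<Rightarrow> nat \<Rightarrow> complex" where
  "nnc q a n = a n * complex_of_real (if n = 0 then 0 else lam q n)"

definition bsh :: "real \<Rightarrow> (nat \<Rightarrow> complex) \<Rightarrow> nat \<Rightarrow> complex" where
  "bsh q a n = a (Suc n) * complex_of_real (lam q (Suc n))"

lemma lam_Suc: "lam q (Suc n) = Gamma (q * real n + 1 + q) / Gamma (q * real n + 1)"
  unfolding lam_def by (simp add: algebra_simps)

lemma wt_Suc: "wt q (Suc n) = Gamma (q * real n + 1 + q)"
  unfolding wt_def by (simp add: algebra_simps)

lemma lam_pos: assumes q: "q > 0" and n: "n \<ge> 1" shows "lam q n > 0"
proof -
  obtain m where m: "n = Suc m" using n by (cases n) auto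
  show ?thesis unfolding m lam_Suc using q by (intro divide_pos_pos Gamma_real_pos arg_pos)
qed

lemma nnc_shift: "nnc q a = (\<lambda>n. case n of 0 \<Rightarrow> 0 | Suc m \<Rightarrow> bsh q a m)"
  by (auto simp: fun_eq_iff nnc_def bsh_def split: nat.split)

lemma op_a_eq: "op_a q f = mlser q (bsh q (coef q f))"
  unfolding op_a_def caputo_def bsh_def ..

lemma adag_mlser: assumes b: "conv b"
  shows "op_adag q (mlser q b) = mlser q (\<lambda>n. case n of 0 \<Rightarrow> 0 | Suc m \<Rightarrow> b m)"
proof
  fix z
  show "op_adag q (mlser q b) z = mlser q (\<lambda>n. case n of 0 \<Rightarrow> 0 | Suc m \<Rightarrow> b m) z"
  proof (cases "z \<in> slit")
    case False then show ?thesis by (simp add: op_adag_def mlser_def)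
  next
    case True
    define w where "w = z powr complex_of_real q"
    have zw: "zq q n z = w ^ n" for n using zq_pow[OF slit_nz[OF True]] w_def by simp
    let ?c = "\<lambda>n. case n of 0 \<Rightarrow> 0 | Suc m \<Rightarrow> b m"
    have "summable (\<lambda>n. ?c n * w ^ n)" using summable_zq[OF conv_shift[OF b], of q z] by (simp add: zw)
    from powser_split_head(1)[OF this]
    have "(\<Sum>n. ?c n * w ^ n) = (\<Sum>n. b n * w ^ n) * w" by simp
    then show ?thesis using True by (simp add: op_adag_def mlser_def zw w_def mult.commute)
  qed
qed

lemma maxdom_bsh:
  assumes q: "q > 0" and f: "f \<in> ML2 q" and m: "ML2coef q (nnc q (coef q f))"
  shows "ML2coef q (bsh q (coef q f))"
    and "summable (\<lambda>n. (cmod (coef q f (Suc n)))\<^sup>2 * (lam q (Suc n))\<^sup>2)"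
proof -
  let ?b = "bsh q (coef q f)"
  have "summable (\<lambda>n. (cmod (nnc q (coef q f) (Suc n)))\<^sup>2 * wt q (Suc n))"
    using m unfolding ML2coef_def by (rule summable_Suc_iff[THEN iffD2])
  then have s: "summable (\<lambda>n. (cmod (?b n))\<^sup>2 * wt q (Suc n))"
    by (simp add: nnc_def bsh_def)
  have "summable (\<lambda>n. (cmod (?b n))\<^sup>2 * wt q n)"
  proof (rule summable_comparison_test_ev[OF _ s])
    show "\<forall>\<^sub>F n in sequentially. norm ((cmod (?b n))\<^sup>2 * wt q n) \<le> (cmod (?b n))\<^sup>2 * wt q (Suc n)"
      using ratio_ev[OF q, of 1]
    proof (rule eventually_mono)
      fix n assume "1 * Gamma (q * real n + 1) \<le> Gamma (q * real n + 1 + q)"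
      then have "wt q n \<le> wt q (Suc n)" unfolding wt_Suc by (simp add: wt_def)
      then show "norm ((cmod (?b n))\<^sup>2 * wt q n) \<le> (cmod (?b n))\<^sup>2 * wt q (Suc n)"
        using wt_pos[OF q, of n] by (simp add: mult_left_mono)
    qed
  qed
  then show b: "ML2coef q ?b" unfolding ML2coef_def .
  have "summable (\<lambda>n. (cmod (?b n))\<^sup>2)"
  proof (rule summable_comparison_test_ev[OF _ b[unfolded ML2coef_def]])
    show "\<forall>\<^sub>F n in sequentially. norm ((cmod (?b n))\<^sup>2) \<le> (cmod (?b n))\<^sup>2 * wt q n"
      using Gamma_ge1_ev[OF q]
    proof (rule eventually_mono)
      fix n assume "1 \<le> Gamma (q * real n + 1)"
      then show "norm ((cmod (?b n))\<^sup>2) \<le> (cmod (?b n))\<^sup>2 * wt q n"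
        unfolding wt_def using mult_left_mono[of 1 "Gamma (q * real n + 1)" "(cmod (?b n))\<^sup>2"] by simp
    qed
  qed
  then show "summable (\<lambda>n. (cmod (coef q f (Suc n)))\<^sup>2 * (lam q (Suc n))\<^sup>2)"
    by (simp add: bsh_def norm_mult power_mult_distrib)
qed

lemma dom_NN_eq: assumes q: "q > 0" shows "dom_NN q = max_dom q"
proof
  show "dom_NN q \<subseteq> max_dom q"
  proof
    fix f assume f: "f \<in> dom_NN q"
    then have fa: "f \<in> ML2 q" "ML2coef q (bsh q (coef q f))" "op_a q f \<in> dom_adag q"
      unfolding dom_NN_def dom_a_def bsh_def by auto
    have "op_adag q (op_a q f) \<in> ML2 q" using fa(3) unfolding dom_adag_def by auto
    then obtain d where d: "ML2coef q d" "op_adag q (op_a q f) = mlser q d" unfolding ML2_def by auto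
    have cb: "conv (bsh q (coef q f))" using ML2coef_conv[OF q fa(2)] .
    have "op_adag q (op_a q f) = mlser q (nnc q (coef q f))"
      unfolding op_a_eq adag_mlser[OF cb] nnc_shift ..
    then have "nnc q (coef q f) = d"
      using mlser_eq_unique[OF q _ ML2coef_conv[OF q d(1)]] d(2) conv_shift[OF cb] nnc_shift by metis
    then show "f \<in> max_dom q" using fa(1) d(1) unfolding max_dom_def nnc_def by auto
  qed
next
  show "max_dom q \<subseteq> dom_NN q"
  proof
    fix f assume f: "f \<in> max_dom q"
    then have f1: "f \<in> ML2 q" and m: "ML2coef q (nnc q (coef q f))"
      unfolding max_dom_def nnc_def by auto
    note mb = maxdom_bsh[OF q f1 m]
    have da: "f \<in> dom_a q" using f1 mb unfolding dom_a_def bsh_def by auto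
    have "op_adag q (op_a q f) = mlser q (nnc q (coef q f))"
      unfolding op_a_eq adag_mlser[OF ML2coef_conv[OF q mb(1)]] nnc_shift ..
    then have "op_a q f \<in> dom_adag q" unfolding dom_adag_def op_a_eq
      using ML2I[OF mb(1)] ML2I[OF m] by (simp add: op_a_eq)
    then show "f \<in> dom_NN q" using da unfolding dom_NN_def by auto
  qed
qed

lemma opNN_eq: assumes q: "q > 0" and f: "f \<in> max_dom q"
  shows "op_NN q f = mlser q (nnc q (coef q f))" and "ML2coef q (nnc q (coef q f))"
proof -
  have f1: "f \<in> ML2 q" and m: "ML2coef q (nnc q (coef q f))"
    using f unfolding max_dom_def nnc_def by auto
  note mb = maxdom_bsh[OF q f1 m]
  show "op_NN q f = mlser q (nnc q (coef q f))"
    unfolding op_NN_def op_a_eq adag_mlser[OF ML2coef_conv[OF q mb(1)]] nnc_shift ..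
  show "ML2coef q (nnc q (coef q f))" by (rule m)
qed

definition fc :: "real \<Rightarrow> nat \<Rightarrow> (nat \<Rightarrow> complex) \<Rightarrow> nat \<Rightarrow> complex" where
  "fc q N c m = (if m < N then c m / complex_of_real (sqrt (Gamma (q * real m + 1))) else 0)"

definition ec :: "real \<Rightarrow> nat \<Rightarrow> nat \<Rightarrow> complex" where
  "ec q n m = (if m = n then 1 / complex_of_real (sqrt (Gamma (q * real n + 1))) else 0)"

lemma suminf_single': "(\<Sum>m. if m = n then (x::complex) else 0) = x"
  using sums_single[of n "\<lambda>_. x"] by (simp add: sums_iff)

lemma ket_eq: "ket q n = mlser q (ec q n)"
proof
  fix z
  have "(\<lambda>m. ec q n m * zq q m z) = (\<lambda>m. if m = n then zq q n z / complex_of_real (sqrt (Gamma (q * real n + 1))) else 0)"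
    by (auto simp: fun_eq_iff ec_def)
  then show "ket q n z = mlser q (ec q n) z"
    by (simp add: ket_def mlser_def suminf_single')
qed

lemma ML2coef_ec: "ML2coef q (ec q n)"
  by (rule ML2coef_fin[where N="Suc n"]) (auto simp: ec_def)

lemma ML2coef_nnc_fin: "(\<And>n. n \<ge> N \<Longrightarrow> a n = 0) \<Longrightarrow> ML2coef q (nnc q a)"
  by (rule ML2coef_fin[where N=N]) (auto simp: nnc_def)

lemma in_max_dom: assumes q: "q > 0" and a: "ML2coef q a" and b: "ML2coef q (nnc q a)"
  shows "mlser q a \<in> max_dom q" "coef q (mlser q a) = a"
proof -
  show c: "coef q (mlser q a) = a" by (rule coef_mlser[OF q a])
  show "mlser q a \<in> max_dom q" using ML2I[OF a] b c unfolding max_dom_def nnc_def by auto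
qed

lemma fc_eq: "(\<lambda>z. \<Sum>k<N. c k * ket q k z) = mlser q (fc q N c)"
proof
  fix z
  show "(\<Sum>k<N. c k * ket q k z) = mlser q (fc q N c) z"
  proof (cases "z \<in> slit")
    case False then show ?thesis by (simp add: ket_def mlser_def)
  next
    case True
    have "(\<Sum>m. fc q N c m * zq q m z) = (\<Sum>m<N. fc q N c m * zq q m z)"
      by (rule suminf_finite) (auto simp: fc_def)
    also have "\<dots> = (\<Sum>k<N. c k * ket q k z)"
      by (rule sum.cong) (use True in \<open>auto simp: fc_def ket_def\<close>)
    finally show ?thesis using True by (simp add: mlser_def)
  qed
qed

lemma ML2coef_fc: "ML2coef q (fc q N c)"
  by (rule ML2coef_fin[where N=N]) (auto simp: fc_def)

lemma nnc_fc: "nnc q (fc q N c) = fc q N (\<lambda>k. c k * complex_of_real (if k = 0 then 0 else lam q k))"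
  by (auto simp: fun_eq_iff nnc_def fc_def)

lemma ml_inner_eq: assumes q: "q > 0" and a: "ML2coef q a" and b: "ML2coef q b"
  shows "ml_inner q (mlser q a) (mlser q b) = (\<Sum>n. cnj (a n) * b n * complex_of_real (wt q n))"
  unfolding ml_inner_def coef_mlser[OF q a] coef_mlser[OF q b] ..

lemma ml_inner_self: assumes q: "q > 0" and a: "ML2coef q a"
  shows "ml_inner q (mlser q a) (mlser q a) = complex_of_real (\<Sum>n. (cmod (a n))\<^sup>2 * wt q n)"
proof -
  have "cnj (a n) * a n * complex_of_real (wt q n) = complex_of_real ((cmod (a n))\<^sup>2 * wt q n)" for n
    by (simp add: complex_norm_square mult.commute del: of_real_power)
  then have e: "(\<lambda>n. cnj (a n) * a n * complex_of_real (wt q n)) = (\<lambda>n. complex_of_real ((cmod (a n))\<^sup>2 * wt q n))"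
    by (rule ext)
  show ?thesis unfolding ml_inner_eq[OF q a a] e
    by (rule suminf_of_real[OF a[unfolded ML2coef_def], symmetric])
qed

lemma maxD: assumes q: "q > 0" and f: "f \<in> max_dom q"
  shows "ML2coef q (coef q f)" "f = mlser q (coef q f)" "ML2coef q (nnc q (coef q f))"
  using f ML2D[OF q] unfolding max_dom_def nnc_def by auto

lemma ket_in: assumes q: "q > 0"
  shows "ket q n \<in> max_dom q" "coef q (ket q n) = ec q n"
  using in_max_dom[OF q ML2coef_ec ML2coef_nnc_fin[where N="Suc n"]] ket_eq[of q n]
  by (auto simp: ec_def)

lemma part2: assumes q: "q > 0"
  shows "op_NN q (ket q n) = (if n \<ge> 1 then (\<lambda>z. complex_of_real (lam q n) * ket q n z) else (\<lambda>z. 0))"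
proof -
  have e: "op_NN q (ket q n) = mlser q (nnc q (ec q n))"
    using opNN_eq(1)[OF q ket_in(1)[OF q]] ket_in(2)[OF q] by simp
  show ?thesis
  proof (cases "n \<ge> 1")
    case True
    have "nnc q (ec q n) = (\<lambda>m. complex_of_real (lam q n) * ec q n m)"
      using True by (auto simp: fun_eq_iff nnc_def ec_def)
    then show ?thesis using True e mlser_scale[OF ML2coef_conv[OF q ML2coef_ec[of q n]], of q "complex_of_real (lam q n)"]
      ket_eq[of q n] by simp
  next
    case False
    then have "nnc q (ec q n) = (\<lambda>_. 0)" by (auto simp: fun_eq_iff nnc_def ec_def)
    then show ?thesis using False e mlser_zero by simp
  qed
qed

lemma fc_in: assumes q: "q > 0"
  shows "mlser q (fc q N c) \<in> max_dom q" "coef q (mlser q (fc q N c)) = fc q N c"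
  using in_max_dom[OF q ML2coef_fc] ML2coef_fc nnc_fc by metis+

lemma part3a: assumes q: "q > 0" shows "ket_span q \<subseteq> max_dom q"
  unfolding ket_span_def using fc_in(1)[OF q] fc_eq by auto

lemma part3b: assumes q: "q > 0"
  shows "op_NN q (\<lambda>z. \<Sum>k<N. c k * ket q k z)
       = (\<lambda>z. \<Sum>k<N. c k * complex_of_real (if k = 0 then 0 else lam q k) * ket q k z)"
  unfolding fc_eq opNN_eq(1)[OF q fc_in(1)[OF q]] fc_in(2)[OF q] nnc_fc ..

lemma part4: assumes q: "q > 0" and f: "f \<in> max_dom q" and z: "z \<in> slit"
  shows "op_NN q f z = (\<Sum>n. coef q f (Suc n) * complex_of_real (lam q (Suc n)) * zq q (Suc n) z)"
proof -
  let ?c = "nnc q (coef q f)"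
  have s: "summable (\<lambda>n. ?c n * zq q n z)"
    by (rule summable_zq[OF ML2coef_conv[OF q opNN_eq(2)[OF q f]]])
  have "op_NN q f z = (\<Sum>n. ?c n * zq q n z)" using opNN_eq(1)[OF q f] z by (simp add: mlser_def)
  also have "\<dots> = (\<Sum>n. ?c (Suc n) * zq q (Suc n) z)"
    using suminf_split_head[OF s] by (simp add: nnc_def)
  finally show ?thesis by (simp add: nnc_def)
qed

lemma zero_in: assumes q: "q > 0" shows "(\<lambda>z. 0) \<in> max_dom q"
  using in_max_dom(1)[OF q ML2coef_fin[of 0 "\<lambda>_. 0"] ML2coef_nnc_fin[of 0]] mlser_zero by (simp add: nnc_def)

lemma add_in: assumes q: "q > 0" and f: "f \<in> max_dom q" and g: "g \<in> max_dom q"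
  shows "(\<lambda>z. f z + g z) \<in> max_dom q \<and> op_NN q (\<lambda>z. f z + g z) = (\<lambda>z. op_NN q f z + op_NN q g z)"
proof -
  let ?a = "coef q f" and ?b = "coef q g"
  note fa = maxD[OF q f] and gb = maxD[OF q g]
  have e: "(\<lambda>z. f z + g z) = mlser q (\<lambda>n. ?a n + ?b n)"
    using mlser_add[OF ML2coef_conv[OF q fa(1)] ML2coef_conv[OF q gb(1)], of q] fa(2) gb(2) by metis
  have n: "nnc q (\<lambda>n. ?a n + ?b n) = (\<lambda>n. nnc q ?a n + nnc q ?b n)"
    by (auto simp: fun_eq_iff nnc_def algebra_simps)
  have m1: "ML2coef q (\<lambda>n. ?a n + ?b n)" by (rule ML2coef_add[OF q fa(1) gb(1)])
  have m2: "ML2coef q (nnc q (\<lambda>n. ?a n + ?b n))" unfolding n by (rule ML2coef_add[OF q fa(3) gb(3)])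
  note im = in_max_dom[OF q m1 m2]
  have "op_NN q (\<lambda>z. f z + g z) = mlser q (\<lambda>n. nnc q ?a n + nnc q ?b n)"
    unfolding e opNN_eq(1)[OF q im(1)] im(2) n ..
  also have "\<dots> = (\<lambda>z. op_NN q f z + op_NN q g z)"
    unfolding opNN_eq(1)[OF q f] opNN_eq(1)[OF q g]
    by (rule mlser_add[OF ML2coef_conv[OF q fa(3)] ML2coef_conv[OF q gb(3)]])
  finally show ?thesis using im(1) e by simp
qed

lemma scale_in: assumes q: "q > 0" and f: "f \<in> max_dom q"
  shows "(\<lambda>z. c * f z) \<in> max_dom q \<and> op_NN q (\<lambda>z. c * f z) = (\<lambda>z. c * op_NN q f z)"
proof -
  let ?a = "coef q f"
  note fa = maxD[OF q f]
  have e: "(\<lambda>z. c * f z) = mlser q (\<lambda>n. c * ?a n)"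
    using mlser_scale[OF ML2coef_conv[OF q fa(1)], of q c] fa(2) by metis
  have n: "nnc q (\<lambda>n. c * ?a n) = (\<lambda>n. c * nnc q ?a n)"
    by (auto simp: fun_eq_iff nnc_def algebra_simps)
  have m1: "ML2coef q (\<lambda>n. c * ?a n)" by (rule ML2coef_scale[OF fa(1)])
  have m2: "ML2coef q (nnc q (\<lambda>n. c * ?a n))" unfolding n by (rule ML2coef_scale[OF fa(3)])
  note im = in_max_dom[OF q m1 m2]
  have "op_NN q (\<lambda>z. c * f z) = mlser q (\<lambda>n. c * nnc q ?a n)"
    unfolding e opNN_eq(1)[OF q im(1)] im(2) n ..
  also have "\<dots> = (\<lambda>z. c * op_NN q f z)"
    unfolding opNN_eq(1)[OF q f]
    by (rule mlser_scale[OF ML2coef_conv[OF q fa(3)]])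
  finally show ?thesis using im(1) e by simp
qed

lemma lin: assumes q: "q > 0" shows "lin_op q (max_dom q) (op_NN q)"
  unfolding lin_op_def
proof (intro conjI ballI allI)
  show "max_dom q \<subseteq> ML2 q" unfolding max_dom_def by auto
  show "(\<lambda>z. 0) \<in> max_dom q" by (rule zero_in[OF q])
  fix f assume f: "f \<in> max_dom q"
  show "op_NN q f \<in> ML2 q" unfolding opNN_eq(1)[OF q f] by (rule ML2I[OF opNN_eq(2)[OF q f]])
  fix c show "(\<lambda>z. c * f z) \<in> max_dom q" "op_NN q (\<lambda>z. c * f z) = (\<lambda>z. c * op_NN q f z)"
    using scale_in[OF q f] by auto
next
  fix f g assume f: "f \<in> max_dom q" and g: "g \<in> max_dom q"
  show "(\<lambda>z. f z + g z) \<in> max_dom q" "op_NN q (\<lambda>z. f z + g z) = (\<lambda>z. op_NN q f z + op_NN q g z)"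
    using add_in[OF q f g] by auto
qed

lemma opNN_coef: assumes q: "q > 0" and f: "f \<in> max_dom q"
  shows "coef q (op_NN q f) = nnc q (coef q f)"
  unfolding opNN_eq(1)[OF q f] by (rule coef_mlser[OF q opNN_eq(2)[OF q f]])

lemma symm: assumes q: "q > 0" and f: "f \<in> max_dom q" and g: "g \<in> max_dom q"
  shows "ml_inner q (op_NN q f) g = ml_inner q f (op_NN q g)"
  unfolding ml_inner_def opNN_coef[OF q f] opNN_coef[OF q g]
  by (rule suminf_cong) (simp add: nnc_def)

lemma lpos: "q > 0 \<Longrightarrow> 0 \<le> (if n = 0 then 0 else lam q n)"
  using lam_pos[of q n] by auto

lemma dense: assumes q: "q > 0" and f: "f \<in> ML2 q" and e: "e > 0"
  shows "\<exists>g\<in>max_dom q. ml_norm q (\<lambda>z. f z - g z) < e"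
proof -
  let ?a = "coef q f"
  note fa = ML2D[OF q f]
  define x where "x n = (cmod (?a n))\<^sup>2 * wt q n" for n
  have sx: "summable x" using fa(1) unfolding ML2coef_def x_def .
  obtain N where N: "\<And>n. n \<ge> N \<Longrightarrow> norm (\<Sum>i. x (i + n)) < e^2"
    using suminf_exist_split[OF _ sx, of "e^2"] e by auto
  define t where "t n = (if n < N then ?a n else 0)" for n
  have mt: "ML2coef q t" by (rule ML2coef_fin[where N=N]) (auto simp: t_def)
  have mnt: "ML2coef q (nnc q t)" by (rule ML2coef_nnc_fin[where N=N]) (auto simp: t_def)
  have gin: "mlser q t \<in> max_dom q" by (rule in_max_dom(1)[OF q mt mnt])
  define h where "h n = ?a n - t n" for n
  have mh: "ML2coef q h" unfolding h_def by (rule ML2coef_diff[OF q fa(1) mt])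
  have fg: "(\<lambda>z. f z - mlser q t z) = mlser q h"
    using mlser_diff[OF ML2coef_conv[OF q fa(1)] ML2coef_conv[OF q mt], of q] fa(2) unfolding h_def by metis
  define r where "r n = (cmod (h n))\<^sup>2 * wt q n" for n
  have r: "r n = (if n < N then 0 else x n)" for n by (simp add: r_def h_def t_def x_def)
  have "(\<lambda>i. r (i + N)) sums (\<Sum>i. x (i + N))"
    using summable_sums[OF summable_ignore_initial_segment[OF sx, of N]] by (simp add: r)
  then have "r sums (\<Sum>i. x (i + N))" by (subst (asm) sums_zero_iff_shift) (auto simp: r)
  then have rS: "(\<Sum>n. r n) = (\<Sum>i. x (i + N))" by (rule sums_unique[symmetric])
  have x0: "0 \<le> x n" for n unfolding x_def using wt_pos[OF q, of n] by (intro mult_nonneg_nonneg) auto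
  have S0: "0 \<le> (\<Sum>i. x (i + N))" using x0 summable_ignore_initial_segment[OF sx, of N] by (intro suminf_nonneg) auto
  have Se: "(\<Sum>i. x (i + N)) < e^2" using N[of N] S0 by simp
  have "ml_norm q (\<lambda>z. f z - mlser q t z) = sqrt (\<Sum>i. x (i + N))"
    unfolding ml_norm_def fg ml_inner_self[OF q mh] using rS by (simp add: r_def)
  also have "\<dots> < sqrt (e^2)" using Se by (rule real_sqrt_less_mono)
  also have "\<dots> = e" using e by simp
  finally show ?thesis using gin by blast
qed

lemma single_sum: "(\<And>m. m \<noteq> n \<Longrightarrow> F m = 0) \<Longrightarrow> (\<Sum>m. F m) = (F n :: complex)"
proof -
  assume "\<And>m. m \<noteq> n \<Longrightarrow> F m = 0"
  then have "F = (\<lambda>m. if m = n then F n else 0)" by auto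
  then show ?thesis by (metis suminf_single')
qed

lemma maxl: assumes q: "q > 0" and g: "g \<in> ML2 q" and h: "h \<in> ML2 q"
  and H: "\<forall>f\<in>max_dom q. ml_inner q (op_NN q f) g = ml_inner q f h"
  shows "g \<in> max_dom q \<and> op_NN q g = h"
proof -
  let ?b = "coef q g" and ?k = "coef q h"
  note gb = ML2D[OF q g] and hk = ML2D[OF q h]
  have kn: "?k n = nnc q ?b n" for n
  proof -
    define s where "s = 1 / complex_of_real (sqrt (Gamma (q * real n + 1)))"
    have s0: "cnj s \<noteq> 0" using wt_pos[OF q, of n] by (simp add: s_def wt_def)
    have w0: "complex_of_real (wt q n) \<noteq> 0" using wt_pos[OF q, of n] by simp
    have "ml_inner q (op_NN q (ket q n)) g = cnj (nnc q (ec q n) n) * ?b n * complex_of_real (wt q n)"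
      unfolding ml_inner_def opNN_coef[OF q ket_in(1)[OF q]] ket_in(2)[OF q]
      by (rule single_sum) (simp add: nnc_def ec_def)
    also have "\<dots> = cnj s * (?b n * complex_of_real (if n = 0 then 0 else lam q n)) * complex_of_real (wt q n)"
      by (simp add: nnc_def ec_def s_def)
    finally have 1: "ml_inner q (op_NN q (ket q n)) g = cnj s * nnc q ?b n * complex_of_real (wt q n)"
      by (simp add: nnc_def)
    have 2: "ml_inner q (ket q n) h = cnj s * ?k n * complex_of_real (wt q n)"
      unfolding ml_inner_def ket_in(2)[OF q]
      by (subst single_sum[of n]) (auto simp: ec_def s_def)
    have "cnj s * nnc q ?b n * complex_of_real (wt q n) = cnj s * ?k n * complex_of_real (wt q n)"
      using H ket_in(1)[OF q, of n] 1 2 by auto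
    then show ?thesis using s0 w0 by simp
  qed
  then have kk: "?k = nnc q ?b" by auto
  have gin: "g \<in> max_dom q" using g hk(1) kk unfolding max_dom_def nnc_def by auto
  have "op_NN q g = mlser q ?k" unfolding opNN_eq(1)[OF q gin] kk ..
  then show ?thesis using gin hk(2) by simp
qed

lemma posl: assumes q: "q > 0" and f: "f \<in> max_dom q"
  shows "Im (ml_inner q f (op_NN q f)) = 0 \<and> Re (ml_inner q f (op_NN q f)) \<ge> 0"
proof -
  let ?a = "coef q f"
  note fa = maxD[OF q f]
  define l where "l n = (if n = 0 then 0 else lam q n)" for n
  have l0: "0 \<le> l n" for n unfolding l_def by (rule lpos[OF q])
  define r where "r n = (cmod (?a n))\<^sup>2 * l n * wt q n" for n
  have r0: "0 \<le> r n" for n unfolding r_def using l0[of n] wt_pos[OF q, of n] by simp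
  have "summable (\<lambda>n. (cmod (?a n))\<^sup>2 * wt q n + (cmod (nnc q ?a n))\<^sup>2 * wt q n)"
    using fa(1,3) unfolding ML2coef_def by (rule summable_add)
  then have sr: "summable r"
  proof (rule summable_comparison_test'[where N=0])
    fix n :: nat
    have "0 \<le> (l n - 1)^2" by simp
    then have "2 * l n \<le> (l n)^2 + 1" by (simp add: power2_eq_square algebra_simps)
    then have ll: "l n \<le> 1 + (l n)^2" using zero_le_power2[of "l n"] by linarith
    have "r n \<le> (cmod (?a n))\<^sup>2 * (1 + (l n)^2) * wt q n"
      unfolding r_def using ll wt_pos[OF q, of n] by (intro mult_right_mono mult_left_mono) auto
    also have "\<dots> = (cmod (?a n))\<^sup>2 * wt q n + (cmod (nnc q ?a n))\<^sup>2 * wt q n"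
      using l0[of n] by (simp add: nnc_def l_def[symmetric] norm_mult power_mult_distrib algebra_simps)
    finally show "norm (r n) \<le> (cmod (?a n))\<^sup>2 * wt q n + (cmod (nnc q ?a n))\<^sup>2 * wt q n"
      using r0[of n] by simp
  qed
  have "cnj (?a n) * nnc q ?a n * complex_of_real (wt q n) = complex_of_real (r n)" for n
    by (simp add: r_def nnc_def l_def[symmetric] complex_norm_square del: of_real_power)
  then have e: "ml_inner q f (op_NN q f) = (\<Sum>n. complex_of_real (r n))"
    unfolding ml_inner_def opNN_coef[OF q f] by simp
  also have "\<dots> = complex_of_real (\<Sum>n. r n)" by (rule suminf_of_real[OF sr, symmetric])
  finally show ?thesis using suminf_nonneg[OF sr r0] by simp
qed

theorem mainTheorem3:
  fixes q :: real
  assumes "q > 0"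
  shows "(\<forall>n. ket q n \<in> dom_NN q)
    \<and> (\<forall>n. op_NN q (ket q n) =
           (if n \<ge> 1 then (\<lambda>z. complex_of_real (lam q n) * ket q n z) else (\<lambda>z. 0)))
    \<and> (ket_span q \<subseteq> dom_NN q
       \<and> (\<forall>N c. op_NN q (\<lambda>z. \<Sum>k<N. c k * ket q k z)
              = (\<lambda>z. \<Sum>k<N. c k * complex_of_real (if k = 0 then 0 else lam q k) * ket q k z))
       \<and> self_adjoint q (dom_NN q) (op_NN q)
       \<and> positive_op q (dom_NN q) (op_NN q)
       \<and> dom_NN q = max_dom q)
    \<and> (\<forall>f \<in> dom_NN q. \<forall>z \<in> slit.
         op_NN q f z = (\<Sum>n. coef q f (Suc n) * complex_of_real (lam q (Suc n)) * zq q (Suc n) z))"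
proof -
  note q = assms
  have D: "dom_NN q = max_dom q" by (rule dom_NN_eq[OF q])
  have SA: "self_adjoint q (max_dom q) (op_NN q)"
    unfolding self_adjoint_def
    using lin[OF q] dense[OF q] symm[OF q] maxl[OF q] by blast
  have PO: "positive_op q (max_dom q) (op_NN q)"
    unfolding positive_op_def using posl[OF q] by blast
  show ?thesis unfolding D
    using ket_in(1)[OF q] part2[OF q] part3a[OF q] part3b[OF q] SA PO part4[OF q] by blast
qed

end
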